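(* There exist constants $c>0$ and $\kappa>0$ such that for all integers $n\ge 2$ and $\ell$ with $1\le \ell\le n$: (i) if $\ell> c\log^5 n$, then $\varphi(n,\ell)\ge \kappa\,\frac{\ell}{n}\,\varphi(n)$; (ii) if $\ell> c\log n$, then $\varphi(n,\ell)\ge \kappa\,\frac{\ell}{\log \ell}$.
   Context: $\mathbb{Z}_m^*=\{x\in\{0,\dots,m-1\}:\gcd(x,m)=1\}$; $\varphi(m)=|\mathbb{Z}_m^*|$ is Euler's totient function and the relative totient function is $\varphi(m,k)=|\{x\in\mathbb{Z}_m^*: x\le k\}|$. Convention: $\log x$ denotes $\max(\ln x,1)$. *)

theory Defs
  imports "HOL-Number_Theory.Number_Theory"
begin

definition rel_totient :: "nat \<Rightarrow> nat \<Rightarrow> nat" where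
  "rel_totient m k = card {x \<in> {0..<m}. coprime x m \<and> x \<le> k}"

text \<open>Convention: log x means max(ln x, 1).\<close>
definition mlog :: "real \<Rightarrow> real" where
  "mlog x = max (ln x) 1"

end

theory Submission
  imports Defs "HOL-Real_Asymp.Real_Asymp"
begin

lemma pdvd_mult_nat: "prime (p::nat) \<Longrightarrow> x \<noteq> 0 \<Longrightarrow> p^k dvd x \<longleftrightarrow> k \<le> multiplicity p x"
  using power_dvd_iff_le_multiplicity[of x p k] prime_gt_1_nat by auto

lemma leg_fact:
  fixes p :: nat
  assumes p: "prime p"
  shows "N \<ge> n \<Longrightarrow> multiplicity p (fact n) = (\<Sum>k\<in>{1..N}. n div p ^ k)"
proof (induction n)
  case 0
  then show ?case by simp
next
  case (Suc n)
  have p2: "p \<ge> 2" using p prime_ge_2_nat by blast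
  have "multiplicity p (fact (Suc n) :: nat) = multiplicity p (Suc n * fact n)"
    by (simp add: fact_Suc)
  also have "\<dots> = multiplicity p (Suc n) + multiplicity p (fact n :: nat)"
    using p by (intro prime_elem_multiplicity_mult_distrib) auto
  also have "multiplicity p (fact n :: nat) = (\<Sum>k\<in>{1..N}. n div p ^ k)"
    using Suc by simp
  also have "multiplicity p (Suc n) = card {k\<in>{1..N}. p ^ k dvd Suc n}"
  proof -
    have "p ^ multiplicity p (Suc n) dvd Suc n" by (rule multiplicity_dvd)
    hence "p ^ multiplicity p (Suc n) \<le> Suc n" by (intro dvd_imp_le) auto
    moreover have "2 ^ multiplicity p (Suc n) \<le> p ^ multiplicity p (Suc n)"
      using p2 by (simp add: power_mono)
    moreover have "multiplicity p (Suc n) < 2 ^ multiplicity p (Suc n)" by (rule less_exp)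
    ultimately have le: "multiplicity p (Suc n) \<le> N" using Suc.prems by linarith
    have "{k\<in>{1..N}. p ^ k dvd Suc n} = {1..multiplicity p (Suc n)}"
      using le p by (auto simp: pdvd_mult_nat)
    thus ?thesis by simp
  qed
  also have "card {k\<in>{1..N}. p ^ k dvd Suc n} = (\<Sum>k\<in>{1..N}. if p ^ k dvd Suc n then 1 else 0)"
    using sum.inter_filter[of "{1..N}" "\<lambda>_. 1::nat" "\<lambda>k. p^k dvd Suc n"] by simp
  also have "\<dots> + (\<Sum>k\<in>{1..N}. n div p ^ k) = (\<Sum>k\<in>{1..N}. Suc n div p ^ k)"
    by (subst sum.distrib[symmetric], intro sum.cong refl)
       (auto simp: div_Suc dvd_eq_mod_eq_0)
  finally show ?case .
qed

lemma two_div_le: "2 * ((m::nat) div q) \<le> (2*m) div q \<and> (2*m) div q \<le> 2 * (m div q) + 1"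
proof (cases "q = 0")
  case False
  obtain a r where m: "m = q*a + r" "r < q" using False
    by (metis div_mult_mod_eq mod_less_divisor neq0_conv mult.commute)
  have "m div q = a" using m by auto
  moreover have "(2*m) div q = 2*a + (2*r) div q"
  proof -
    have "2*m = 2*r + (2*a)*q" using m by simp
    thus ?thesis using False by simp
  qed
  moreover have "(2*r) div q < 2" using m False
    by (simp add: div_less_iff_less_mult mult.commute)
  ultimately show ?thesis by simp
qed simp

lemma central_binom_pp:
  fixes p m :: nat
  assumes p: "prime p" and m: "m \<ge> 1"
  shows "p ^ multiplicity p ((2*m) choose m) \<le> 2*m"
proof (rule ccontr)
  define C where "C = (2*m) choose m"
  define e where "e = multiplicity p C"
  assume "\<not> ?thesis"
  hence big: "p ^ e > 2*m" by (simp add: C_def e_def)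
  have p2: "p \<ge> 2" using p prime_ge_2_nat by blast
  have "fact (2*m) = (fact m * fact m * C :: nat)"
    using binomial_fact_lemma[of m "2*m"] by (simp add: C_def mult_2 algebra_simps)
  hence "multiplicity p (fact (2*m) :: nat) = multiplicity p (fact m :: nat) + multiplicity p (fact m :: nat) + e"
    using p by (simp add: prime_elem_multiplicity_mult_distrib C_def e_def)
  hence eq: "(\<Sum>k\<in>{1..2*m}. (2*m) div p ^ k) = 2 * (\<Sum>k\<in>{1..2*m}. m div p ^ k) + e"
    using leg_fact[OF p, of "2*m" "2*m"] leg_fact[OF p, of m "2*m"] by simp
  have "e = (\<Sum>k\<in>{1..2*m}. (2*m) div p ^ k - 2 * (m div p ^ k))"
    using eq two_div_le by (subst sum_subtractf_nat) (auto simp: sum_distrib_left)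
  also have "\<dots> \<le> (\<Sum>k\<in>{1..2*m}. if k < e then 1 else 0)"
  proof (intro sum_mono)
    fix i assume i: "i \<in> {1..2 * m}"
    show "(2*m) div p ^ i - 2 * (m div p ^ i) \<le> (if i < e then 1 else 0)"
    proof (cases "i < e")
      case True thus ?thesis using two_div_le[of m "p^i"] by auto
    next
      case False
      hence "p ^ e \<le> p ^ i" using p2 by (intro power_increasing) auto
      hence "2*m < p ^ i" using big by linarith
      thus ?thesis by simp
    qed
  qed
  also have "\<dots> = card {k\<in>{1..2*m}. k < e}"
    using sum.inter_filter[of "{1..2*m}" "\<lambda>_. 1::nat" "\<lambda>k. k < e"] by simp
  also have "\<dots> \<le> card {1..<e}" by (intro card_mono) auto
  also have "\<dots> = e - 1" by simp
  finally have "e = 0" by simp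
  thus False using big m by simp
qed


lemma two_m_le: "2 * (m::nat) \<le> 2 ^ m"
proof (cases m)
  case (Suc k)
  have "k < 2 ^ k" by (rule less_exp)
  hence "Suc k \<le> 2 ^ k" by (simp add: Suc_le_eq)
  thus ?thesis using Suc by simp
qed simp

lemma binom_le_pi:
  fixes m :: nat assumes m: "m \<ge> 1"
  shows "(2*m) choose m \<le> (2*m) ^ card {p\<in>{..2*m}. prime p}"
proof -
  define C where "C = (2*m) choose m"
  have Cpos: "C > 0" by (simp add: C_def)
  have "C = (\<Prod>p\<in>prime_factors C. p ^ multiplicity p C)"
    using Cpos by (rule prime_factorization_nat)
  also have "\<dots> \<le> (\<Prod>p\<in>prime_factors C. 2*m)"
    by (intro prod_mono) (auto simp: C_def intro!: central_binom_pp m)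
  also have "\<dots> = (2*m) ^ card (prime_factors C)" by simp
  also have "\<dots> \<le> (2*m) ^ card {p\<in>{..2*m}. prime p}"
  proof (intro power_increasing card_mono)
    show "prime_factors C \<subseteq> {p \<in> {..2 * m}. prime p}"
    proof
      fix p assume p: "p \<in> prime_factors C"
      hence pr: "prime p" by auto
      have "multiplicity p C \<ge> 1" using p
        by (simp add: prime_factors_multiplicity Suc_le_eq)
      hence "p ^ 1 \<le> p ^ multiplicity p C" using pr prime_gt_0_nat[OF pr]
        by (intro power_increasing) auto
      also have "\<dots> \<le> 2*m" unfolding C_def using pr m by (intro central_binom_pp) auto
      finally show "p \<in> {p \<in> {..2 * m}. prime p}" using pr by auto
    qed
  qed (use m in auto)
  finally show ?thesis by (simp add: C_def)
qed

lemma cheb: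
  fixes N :: nat assumes N: "N \<ge> 2"
  shows "real (card {p\<in>{..N}. prime p}) \<ge> ln 2 / 4 * N / ln N"
proof -
  define m where "m = N div 2"
  have m1: "m \<ge> 1" using N by (simp add: m_def)
  have mN: "2*m \<le> N" by (simp add: m_def)
  have m4: "real N \<le> 4 * m" using N unfolding m_def by linarith
  define P where "P = card {p\<in>{..N}. prime p}"
  define P' where "P' = card {p\<in>{..2*m}. prime p}"
  have PP: "P' \<le> P" unfolding P_def P'_def using mN by (intro card_mono) auto
  have "(2::real)^m \<le> 4^m / (2 * real m)"
  proof -
    have le: "2 * real m \<le> 2 ^ m" using two_m_le[of m] by (metis of_nat_le_iff of_nat_mult of_nat_numeral of_nat_power)
    have eq: "(4::real)^m = 2^m * 2^m" by (simp add: power_mult_distrib[symmetric])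
    have h: "1 \<le> (2::real)^m / (2*real m)" using le m1 by (simp add: le_divide_eq)
    have "(2::real)^m * 1 \<le> 2^m * (2^m/(2*real m))" using h by (intro mult_left_mono) auto
    thus ?thesis using eq by simp
  qed
  also have "\<dots> \<le> real ((2*m) choose m)" using m1 by (intro central_binomial_lower_bound) auto
  also have "\<dots> \<le> real ((2*m) ^ P')" unfolding P'_def using binom_le_pi[OF m1] by (simp only: of_nat_le_iff)
  also have "\<dots> = real (2*m) ^ P'" by simp
  also have "\<dots> \<le> real N ^ P'" using mN by (intro power_mono) auto
  also have "\<dots> \<le> real N ^ P" using PP N by (intro power_increasing) auto
  finally have "2 ^ m \<le> real N ^ P" by simp
  hence "ln (2 ^ m) \<le> ln (real N ^ P)" using N by (subst ln_le_cancel_iff) auto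
  hence "m * ln 2 \<le> P * ln N" using N by (simp add: ln_realpow)
  moreover have "ln N > 0" using N by simp
  moreover have "N * ln 2 \<le> (4*m) * ln 2" using m4 by (intro mult_right_mono) auto
  ultimately have "N * ln 2 \<le> 4 * (P * ln N)" by linarith
  thus ?thesis unfolding P_def using \<open>ln N > 0\<close> by (simp add: field_simps)
qed


lemma coprime_pf: "n > (0::nat) \<Longrightarrow> coprime a n \<longleftrightarrow> (\<forall>p\<in>prime_factors n. \<not> p dvd a)"
proof
  assume n: "n > 0" and c: "coprime a n"
  show "\<forall>p\<in>prime_factors n. \<not> p dvd a"
  proof (intro ballI notI)
    fix p assume "p \<in> prime_factors n" "p dvd a"
    hence "prime p" "p dvd n" "p dvd a" by (auto simp: in_prime_factors_iff)
    thus False using c coprime_common_divisor not_prime_unit by blast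
  qed
next
  assume n: "n > 0" and h: "\<forall>p\<in>prime_factors n. \<not> p dvd a"
  show "coprime a n"
  proof (rule coprimeI)
    fix c assume ca: "c dvd a" and cn: "c dvd n"
    show "is_unit c"
    proof (rule ccontr)
      assume "\<not> is_unit c"
      hence "c \<noteq> 1" by auto
      then obtain p where p: "prime p" "p dvd c" using prime_factor_nat by blast
      hence "p \<in> prime_factors n" using n cn by (auto simp: in_prime_factors_iff intro: dvd_trans)
      moreover have "p dvd a" using p ca by (auto intro: dvd_trans)
      ultimately show False using h by blast
    qed
  qed
qed

lemma ln_le_harm': "ln (real X + 1) \<le> (\<Sum>k\<in>{1..X}. 1 / real k)"
proof (induction X)
  case 0 then show ?case by simp
next
  case (Suc X)
  have eq: "(real X+1)*(1+1/(real X+1)) = real (Suc X)+1" by (simp add: field_simps)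
  have "ln (real (Suc X) + 1) = ln (real X + 1) + ln (1 + 1 / (real X + 1))"
    by (subst eq[symmetric], subst ln_mult) (auto simp: field_simps)
  also have "ln (1 + 1 / (real X + 1)) \<le> 1 / (real X + 1)"
    by (intro ln_add_one_self_le_self) auto
  finally show ?case using Suc by (simp add: add.commute)
qed

definition TT :: "nat set \<Rightarrow> nat \<Rightarrow> real" where
  "TT F X = (\<Sum>a\<in>{a\<in>{1..X}. \<forall>q\<in>F. \<not> q dvd a}. 1 / real a)"

lemma TT_step:
  assumes p: "prime (p::nat)"
  shows "TT F X \<le> real p / (real p - 1) * TT (insert p F) X"
proof -
  define A where "A = {a\<in>{1..X}. \<forall>q\<in>F. \<not> q dvd a}"
  define A' where "A' = {a\<in>{1..X}. \<forall>q\<in>insert p F. \<not> q dvd a}"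
  define g where "g = (\<lambda>a::nat. (multiplicity p a, a div p ^ multiplicity p a))"
  define h where "h = (\<lambda>(k::nat, b::nat). (1 / real p) ^ k * (1 / real b))"
  have p2: "p \<ge> 2" using p prime_ge_2_nat by blast
  have nu: "\<not> is_unit p" using p2 by auto
  have dec: "a = p ^ multiplicity p a * (a div p ^ multiplicity p a)" for a
    using multiplicity_dvd[of p a] by simp
  have inj: "inj_on g A"
  proof
    fix a a' assume "a \<in> A" "a' \<in> A" "g a = g a'"
    thus "a = a'" using dec[of a] dec[of a'] by (auto simp: g_def)
  qed
  have gA: "g ` A \<subseteq> {..X} \<times> A'"
  proof
    fix y assume "y \<in> g ` A"
    then obtain a where a: "a \<in> A" "y = g a" by auto
    define k where "k = multiplicity p a"
    define b where "b = a div p ^ k"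
    have a1: "a \<ge> 1" "a \<le> X" using a by (auto simp: A_def)
    have ab: "a = p ^ k * b" using dec[of a] by (simp add: k_def b_def)
    have b1: "b \<ge> 1" using ab a1 by (cases b) auto
    have pk: "p ^ k \<ge> 1" using p2 by simp
    have "1 * b \<le> p ^ k * b" using pk by (rule mult_le_mono1)
    hence ba: "b \<le> a" using ab by simp
    have "k < 2 ^ k" by (rule less_exp)
    also have "2 ^ k \<le> p ^ k" using p2 by (simp add: power_mono)
    also have "p ^ k * 1 \<le> p ^ k * b" using b1 by (rule mult_le_mono2)
    also have "p ^ k * b = a" using ab by simp
    finally have kX: "k \<le> X" using a1 by linarith
    have "\<not> p dvd b" unfolding b_def k_def using a1 nu
      by (intro multiplicity_decompose) auto
    moreover have "\<not> q dvd b" if "q \<in> F" for q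
    proof
      assume "q dvd b"
      hence "q dvd a" using ab by simp
      thus False using a that by (auto simp: A_def)
    qed
    ultimately have "b \<in> A'" using b1 ba a1 by (auto simp: A'_def)
    thus "y \<in> {..X} \<times> A'" using a kX by (simp add: g_def k_def b_def)
  qed
  have "TT F X = (\<Sum>a\<in>A. h (g a))"
    unfolding TT_def A_def[symmetric]
  proof (intro sum.cong refl)
    fix a assume "a \<in> A"
    have "real a = real p ^ multiplicity p a * real (a div p ^ multiplicity p a)"
      by (subst dec[of a]) (simp add: of_nat_mult of_nat_power)
    thus "1 / real a = h (g a)" by (simp add: h_def g_def power_one_over)
  qed
  also have "\<dots> = (\<Sum>y\<in>g ` A. h y)" using inj by (simp add: sum.reindex)
  also have "\<dots> \<le> (\<Sum>y\<in>{..X} \<times> A'. h y)"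
    by (intro sum_mono2 gA) (auto simp: h_def A'_def)
  also have "\<dots> = (\<Sum>k\<in>{..X}. (1 / real p) ^ k) * (\<Sum>b\<in>A'. 1 / real b)"
    by (simp add: h_def sum_product sum.cartesian_product)
  also have "(\<Sum>b\<in>A'. 1 / real b) = TT (insert p F) X" by (simp add: TT_def A'_def)
  also have "(\<Sum>k\<in>{..X}. (1 / real p) ^ k) \<le> real p / (real p - 1)"
  proof -
    have "(\<Sum>k\<in>{..X}. (1 / real p) ^ k) = (\<Sum>k<Suc X. (1 / real p) ^ k)"
      by (simp add: lessThan_Suc_atMost)
    also have "\<dots> = ((1/real p) ^ Suc X - 1) / (1/real p - 1)"
      using p2 by (intro geometric_sum) auto
    also have "\<dots> = (1 - (1/real p) ^ Suc X) / (1 - 1/real p)"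
      by (metis minus_diff_eq minus_divide_divide)
    also have "\<dots> \<le> 1 / (1 - 1/real p)"
      using p2 by (intro divide_right_mono) (auto simp: field_simps)
    also have "\<dots> = real p / (real p - 1)" using p2 by (simp add: field_simps)
    finally show ?thesis .
  qed
  hence "(\<Sum>k\<in>{..X}. (1 / real p) ^ k) * TT (insert p F) X \<le> real p / (real p - 1) * TT (insert p F) X"
    by (intro mult_right_mono) (auto simp: TT_def intro!: sum_nonneg)
  finally show ?thesis .
qed

lemma TT_lower:
  assumes "finite F" "\<forall>p\<in>F. prime p"
  shows "TT F X \<ge> (\<Prod>p\<in>F. 1 - 1 / real p) * ln (real X + 1)"
  using assms
proof (induction F rule: finite_induct)
  case empty
  have "{a\<in>{1..X}. \<forall>q\<in>{}. \<not> q dvd a} = {1..X}" by auto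
  then show ?case using ln_le_harm'[of X] by (simp add: TT_def)
next
  case (insert p F)
  have p: "prime p" using insert by auto
  have p2: "real p \<ge> 2" using p prime_ge_2_nat by auto
  have "(\<Prod>p\<in>insert p F. 1 - 1 / real p) * ln (real X + 1)
        = (1 - 1 / real p) * ((\<Prod>p\<in>F. 1 - 1 / real p) * ln (real X + 1))"
    using insert by simp
  also have "\<dots> \<le> (1 - 1 / real p) * TT F X"
    using insert p2 by (intro mult_left_mono) auto
  also have "\<dots> \<le> (1 - 1 / real p) * (real p / (real p - 1) * TT (insert p F) X)"
    using p2 TT_step[OF p, of F X] by (intro mult_left_mono) auto
  also have "\<dots> = TT (insert p F) X" using p2 by (simp add: field_simps)
  finally show ?case .
qed

lemma harm_coprime:
  assumes n: "n > (0::nat)"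
  shows "(\<Sum>a\<in>{a\<in>{1..X}. coprime a n}. 1 / real a) \<ge> real (totient n) / real n * ln (real X + 1)"
proof -
  have "real (totient n) / real n = (\<Prod>p\<in>prime_factors n. 1 - 1 / real p)"
    using n by (subst totient_formula2) simp
  also have "\<dots> * ln (real X + 1) \<le> TT (prime_factors n) X"
    by (intro TT_lower) auto
  also have "TT (prime_factors n) X = (\<Sum>a\<in>{a\<in>{1..X}. coprime a n}. 1 / real a)"
    unfolding TT_def using coprime_pf[OF n] by simp
  finally show ?thesis .
qed
lemma big_pf:
  assumes n: "n > (0::nat)" and B: "B \<ge> (2::nat)"
  shows "real (card {p\<in>prime_factors n. p > B}) * ln (real B) \<le> ln (real n)"
proof -
  define S where "S = {p\<in>prime_factors n. p > B}"
  have fin: "finite (prime_factors n)" by simp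
  have SS: "S \<subseteq> prime_factors n" by (auto simp: S_def)
  have "B ^ card S = (\<Prod>p\<in>S. B)" by simp
  also have "\<dots> \<le> (\<Prod>p\<in>S. p)" by (intro prod_mono) (auto simp: S_def)
  also have "\<dots> \<le> (\<Prod>p\<in>S. p) * (\<Prod>p\<in>prime_factors n - S. p)"
  proof -
    have "(\<Prod>p\<in>prime_factors n - S. p) \<ge> 1"
      by (intro prod_ge_1) (auto dest: in_prime_factors_imp_prime prime_gt_0_nat simp: Suc_le_eq)
    thus ?thesis by simp
  qed
  also have "\<dots> = (\<Prod>p\<in>prime_factors n. p)"
    using prod.subset_diff[OF SS fin, of "\<lambda>p. p"] by simp
  also have "\<dots> \<le> (\<Prod>p\<in>prime_factors n. p ^ multiplicity p n)"
  proof (intro prod_mono conjI)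
    fix p assume p: "p \<in> prime_factors n"
    hence "multiplicity p n \<ge> 1" by (simp add: prime_factors_multiplicity Suc_le_eq)
    moreover have "p \<ge> 1" using p by (auto dest: in_prime_factors_imp_prime prime_gt_0_nat simp: Suc_le_eq)
    ultimately show "p \<le> p ^ multiplicity p n" using power_increasing[of 1 "multiplicity p n" p] by simp
  qed simp
  also have "\<dots> = n" using n by (rule prime_factorization_nat[symmetric])
  finally have "B ^ card S \<le> n" .
  hence "real B ^ card S \<le> real n" by (metis of_nat_le_iff of_nat_power)
  hence "ln (real B ^ card S) \<le> ln (real n)" using B n by (subst ln_le_cancel_iff) auto
  thus ?thesis using B by (simp add: ln_realpow S_def)
qed

lemma count_primes_avoid:
  assumes n: "n > (0::nat)" and B: "B \<ge> (2::nat)" and Y: "Y \<ge> (2::nat)"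
  shows "real (card {q. prime q \<and> q \<le> Y \<and> \<not> q dvd n \<and> B < q}) \<ge> ln 2 / 4 * Y / ln Y - B - ln n / ln B"
proof -
  define G where "G = {q. prime q \<and> q \<le> Y \<and> \<not> q dvd n \<and> B < q}"
  define S where "S = {p\<in>prime_factors n. p > B}"
  have "{p\<in>{..Y}. prime p} \<subseteq> G \<union> {1..B} \<union> S"
    using n by (auto simp: G_def S_def in_prime_factors_iff dest: prime_gt_0_nat)
  hence "card {p\<in>{..Y}. prime p} \<le> card (G \<union> {1..B} \<union> S)"
    by (intro card_mono) (auto simp: G_def S_def)
  also have "\<dots> \<le> card G + card {1..B} + card S"
    by (metis card_Un_le add_le_mono le_trans order_refl)
  finally have "real (card {p\<in>{..Y}. prime p}) \<le> card G + B + card S" by simp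
  moreover have "real (card S) \<le> ln n / ln B"
    using big_pf[OF n B] B by (simp add: S_def field_simps)
  moreover have "real (card {p\<in>{..Y}. prime p}) \<ge> ln 2 / 4 * Y / ln Y" using cheb[OF Y] .
  ultimately show ?thesis unfolding G_def by linarith
qed

lemma uniq_aq:
  fixes a a' q q' B :: nat
  assumes "prime q" "prime q'" "1 \<le> a" "a \<le> B" "B < q" "1 \<le> a'" "a' \<le> B" "B < q'" "a*q = a'*q'"
  shows "a = a' \<and> q = q'"
proof -
  have "q dvd a' * q'" using assms(9) by (metis dvd_triv_right)
  hence "q dvd a' \<or> q dvd q'" using assms(1) by (simp add: prime_dvd_mult_iff)
  moreover have "\<not> q dvd a'" using assms by (metis dvd_imp_le not_le less_le_trans le_less_trans not_one_le_zero linorder_not_less gr0I)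
  ultimately have "q dvd q'" by blast
  hence "q = q'" using assms(1,2) by (simp add: primes_dvd_imp_eq)
  thus ?thesis using assms(9) assms(1) prime_gt_0_nat by auto
qed
lemma part_i:
  fixes n l :: nat and x :: real
  defines "x \<equiv> real l"
  assumes n: "n \<ge> 2" and ln_le: "l \<le> n"
    and E1: "x powr (1/3) \<ge> 3" and E2: "x powr (2/3) \<ge> 32"
    and E3: "x powr (1/3) + x powr (1/5) / ln (x powr (1/3) - 1) \<le> (ln 2/4) * x powr (2/3) / (4 * ln x)"
    and E4: "ln (x powr (1/3) - 1) \<ge> ln x / 6"
    and E8: "ln x \<ge> 1"
    and lnn: "ln (real n) \<le> x powr (1/5)"
  shows "real (rel_totient n l) \<ge> (ln 2 / 4) / 24 * (real l / real n) * real (totient n)"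
proof -
  define a0 :: real where "a0 = ln 2 / 4"
  have a0pos: "a0 > 0" by (simp add: a0_def)
  define u where "u = x powr (1/3)"
  define B where "B = nat \<lfloor>u\<rfloor>"
  have xpos: "x > 0" using E8 unfolding x_def by (cases "l = 0") auto
  have uB: "real B \<le> u" "real B \<ge> u - 1" using E1 by (auto simp: B_def u_def)
  have B2: "B \<ge> 2" using uB E1 unfolding u_def by linarith
  have lnB: "ln (real B) \<ge> ln (u - 1)" using uB E1 by (subst ln_le_cancel_iff) (auto simp: u_def)
  have xu: "x powr (2/3) * u = x" unfolding u_def using xpos
    by (simp add: powr_add[symmetric])
  define A where "A = {a\<in>{1..B}. coprime a n}"
  define Q where "Q = (\<lambda>a. {q. prime q \<and> q \<le> l div a \<and> \<not> q dvd n \<and> B < q})"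
  define M where "M = {y \<in> {0..<n}. coprime y n \<and> y \<le> l}"
  have n0: "n > 0" using n by simp
  have cardQ: "real (card (Q a)) \<ge> a0 * x / (4 * ln x) * (1 / real a)" if a: "a \<in> A" for a
  proof -
    have a1: "a \<ge> 1" "real a \<le> u" using a uB by (auto simp: A_def)
    define Y where "Y = l div a"
    have "x / real a \<ge> x / u" using a1 xpos E1 by (intro divide_left_mono) (auto simp: u_def)
    also have "x / u = x powr (2/3)"
    proof -
      have "x / u = (x powr (2/3) * u) / u" using xu by simp
      also have "\<dots> = x powr (2/3)" using E1 by (simp add: u_def)
      finally show ?thesis .
    qed
    finally have xa: "x / real a \<ge> x powr (2/3)" .
    have Y1: "real Y \<ge> x / real a - 1"
    proof -
      have "l = a * Y + l mod a" by (simp add: Y_def)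
      hence e: "x = real a * real Y + real (l mod a)" unfolding x_def by (metis of_nat_add of_nat_mult)
      have "l mod a < a" using a1 by simp
      hence "x \<le> real a * (real Y + 1)" using e by (simp add: algebra_simps)
      hence "x / real a \<le> real Y + 1" using a1 by (simp add: pos_divide_le_eq mult.commute)
      thus ?thesis by linarith
    qed
    have "x / (2 * real a) = (x / real a) / 2" by simp
    hence Y2: "real Y \<ge> x / (2 * real a)" using Y1 xa E2 by linarith
    have Ypos: "Y \<ge> 2" using Y1 xa E2 by linarith
    have Yl: "real Y \<le> x" unfolding Y_def x_def by (simp add: div_le_dividend)
    have lnY: "ln (real Y) \<le> ln x" "ln (real Y) > 0" using Yl Ypos xpos by auto
    have "real (card (Q a)) \<ge> a0 * Y / ln Y - B - ln n / ln B"
      unfolding Q_def Y_def[symmetric] a0_def using count_primes_avoid[OF n0 B2 Ypos] by simp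
    moreover have "a0 * Y / ln Y \<ge> a0 * (x / (2 * real a)) / ln x"
      using lnY Y2 a0pos by (intro frac_le mult_left_mono) auto
    moreover have "real B + ln n / ln B \<le> u + x powr (1/5) / ln (u - 1)"
    proof -
      have "ln (u - 1) > 0" using E4 E8 unfolding u_def by linarith
      hence "ln n / ln B \<le> x powr (1/5) / ln (u - 1)"
        using lnB lnn n by (intro frac_le) auto
      thus ?thesis using uB by linarith
    qed
    moreover have "u + x powr (1/5) / ln (u - 1) \<le> a0 * (x / real a) / (4 * ln x)"
    proof -
      have "a0 * x powr (2/3) / (4 * ln x) \<le> a0 * (x / real a) / (4 * ln x)"
        using xa a0pos E8 by (intro divide_right_mono mult_left_mono) auto
      thus ?thesis using E3 by (simp add: u_def a0_def)
    qed
    ultimately have "real (card (Q a)) \<ge> a0 * (x / (2 * real a)) / ln x - a0 * (x / real a) / (4 * ln x)"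
      by linarith
    also have "a0 * (x / (2 * real a)) / ln x - a0 * (x / real a) / (4 * ln x) = a0 * x / (4 * ln x) * (1 / real a)"
      using E8 a1 by (simp add: field_simps)
    finally show ?thesis .
  qed
  have sub: "(\<Union>a\<in>A. (\<lambda>q. a * q) ` Q a) \<subseteq> M"
  proof safe
    fix a q assume a: "a \<in> A" and q: "q \<in> Q a"
    have a1: "a \<ge> 1" "coprime a n" using a by (auto simp: A_def)
    have q1: "prime q" "q \<le> l div a" "\<not> q dvd n" using q by (auto simp: Q_def)
    have "a * q \<le> a * (l div a)" using q1 by simp
    also have "\<dots> \<le> l" by simp
    finally have aql: "a * q \<le> l" .
    have cop: "coprime (a*q) n" using a1 q1 by (simp add: prime_imp_coprime)
    have "a * q \<noteq> n" using q1 by auto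
    thus "a * q \<in> M" using aql ln_le cop by (auto simp: M_def)
  qed
  have finQ: "finite (Q a)" for a by (rule finite_subset[of _ "{..l}"]) (auto simp: Q_def intro: le_trans div_le_dividend)
  have "card (\<Union>a\<in>A. (\<lambda>q. a * q) ` Q a) = (\<Sum>a\<in>A. card ((\<lambda>q. a * q) ` Q a))"
  proof (rule card_UN_disjoint)
    show "finite A" by (simp add: A_def)
    show "\<forall>i\<in>A. finite ((*) i ` Q i)" using finQ by auto
    show "\<forall>i\<in>A. \<forall>j\<in>A. i \<noteq> j \<longrightarrow> (*) i ` Q i \<inter> (*) j ` Q j = {}"
    proof (intro ballI impI)
      fix i j assume ij: "i \<in> A" "j \<in> A" "i \<noteq> j"
      show "(*) i ` Q i \<inter> (*) j ` Q j = {}"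
      proof (rule ccontr)
        assume "(*) i ` Q i \<inter> (*) j ` Q j \<noteq> {}"
        then obtain q q' where "q \<in> Q i" "q' \<in> Q j" "i * q = j * q'" by auto
        thus False using uniq_aq[of q q' i B j] ij by (auto simp: A_def Q_def)
      qed
    qed
  qed
  also have "\<dots> = (\<Sum>a\<in>A. card (Q a))"
  proof (intro sum.cong refl card_image)
    fix a assume "a \<in> A" hence "a \<ge> 1" by (auto simp: A_def)
    thus "inj_on ((*) a) (Q a)" by (auto simp: inj_on_def)
  qed
  finally have cardU: "card (\<Union>a\<in>A. (\<lambda>q. a * q) ` Q a) = (\<Sum>a\<in>A. card (Q a))" .
  have cm: "(\<Sum>a\<in>A. card (Q a)) \<le> card M"
    using card_mono[OF _ sub] cardU by (simp add: M_def)
  hence "real (\<Sum>a\<in>A. card (Q a)) \<le> real (card M)" by (simp only: of_nat_le_iff)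
  hence R1: "real (rel_totient n l) \<ge> (\<Sum>a\<in>A. real (card (Q a)))"
    by (simp add: rel_totient_def M_def)
  have R2: "(\<Sum>a\<in>A. real (card (Q a))) \<ge> (\<Sum>a\<in>A. a0 * x / (4 * ln x) * (1 / real a))"
    using cardQ by (intro sum_mono) auto
  have R3: "(\<Sum>a\<in>A. a0 * x / (4 * ln x) * (1 / real a)) = a0 * x / (4 * ln x) * (\<Sum>a\<in>A. 1 / real a)"
    by (simp add: sum_distrib_left)
  have R4: "(\<Sum>a\<in>A. 1 / real a) \<ge> real (totient n) / real n * ln (real B + 1)"
    unfolding A_def using harm_coprime[OF n0, of B] by simp
  have R5: "ln (real B + 1) \<ge> ln x / 6"
  proof -
    have "ln (real B + 1) \<ge> ln (real B)" using B2 by simp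
    thus ?thesis using lnB E4 unfolding u_def by linarith
  qed
  have K0: "a0 * x / (4 * ln x) \<ge> 0"
  proof -
    have "0 \<le> 4 * ln x" using E8 by linarith
    moreover have "0 \<le> a0 * x" using a0pos xpos by simp
    ultimately show ?thesis by (rule divide_nonneg_nonneg[rotated])
  qed
  have R6: "real (totient n) / real n * (ln x / 6) \<le> real (totient n) / real n * ln (real B + 1)"
    using R5 by (intro mult_left_mono) auto
  have S1: "real (totient n) / real n * (ln x / 6) \<le> (\<Sum>a\<in>A. 1 / real a)"
    using R6 R4 by linarith
  have R7: "a0 * x / (4 * ln x) * (real (totient n) / real n * (ln x / 6)) \<le> a0 * x / (4 * ln x) * (\<Sum>a\<in>A. 1 / real a)"
    using S1 K0 by (rule mult_left_mono)
  have "real (rel_totient n l) \<ge> a0 * x / (4 * ln x) * (real (totient n) / real n * (ln x / 6))"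
    using R1 R2 R3 R7 by linarith
  also have "a0 * x / (4 * ln x) * (real (totient n) / real n * (ln x / 6)) = a0 / 24 * (real l / real n) * real (totient n)"
    using E8 by (simp add: x_def field_simps)
  finally show ?thesis by (simp add: a0_def)
qed

lemma floor_nat_bounds: "(t::real) \<ge> 0 \<Longrightarrow> real (nat \<lfloor>t\<rfloor>) \<le> t \<and> real (nat \<lfloor>t\<rfloor>) \<ge> t - 1"
proof -
  assume t: "t \<ge> 0"
  hence "real (nat \<lfloor>t\<rfloor>) = of_int \<lfloor>t\<rfloor>" by simp
  thus ?thesis by linarith
qed

lemma part_ii:
  fixes n l :: nat and x :: real
  defines "x \<equiv> real l"
  assumes n: "n \<ge> 2" and ln_le: "l \<le> n"
    and E5: "sqrt x \<ge> 3" and E6: "ln (sqrt x - 1) \<ge> ln x / 4"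
    and E7: "sqrt x \<le> (ln 2/4) * x / (4 * ln x)"
    and E8: "ln x \<ge> 1"
    and lnn: "ln (real n) \<le> (ln 2 / 4) / 16 * x"
  shows "real (rel_totient n l) \<ge> (ln 2 / 4) / 2 * (x / ln x)"
proof -
  define a0 :: real where "a0 = ln 2 / 4"
  have a0pos: "a0 > 0" by (simp add: a0_def)
  define B where "B = nat \<lfloor>sqrt x\<rfloor>"
  have xpos: "x > 0" using E8 unfolding x_def by (cases "l = 0") auto
  have fb: "real (nat \<lfloor>sqrt x\<rfloor>) \<le> sqrt x \<and> real (nat \<lfloor>sqrt x\<rfloor>) \<ge> sqrt x - 1"
    using E5 by (intro floor_nat_bounds) (auto simp: x_def)
  have uB: "real B \<le> sqrt x" "real B \<ge> sqrt x - 1" unfolding B_def using fb by auto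
  have B2: "B \<ge> 2" using uB E5 by linarith
  have x9: "x \<ge> 9"
  proof -
    have "3 * 3 \<le> sqrt x * sqrt x" using E5 by (intro mult_mono) (auto simp: x_def)
    thus ?thesis using xpos by simp
  qed
  have lnB: "ln (real B) \<ge> ln x / 4"
  proof -
    have "ln (real B) \<ge> ln (sqrt x - 1)" using uB E5 x9 by (subst ln_le_cancel_iff) auto
    thus ?thesis using E6 by linarith
  qed
  have lnBpos: "ln (real B) > 0" using lnB E8 by linarith
  have l2: "l \<ge> 2" using x9 unfolding x_def by linarith
  have n0: "n > 0" using n by simp
  define Q where "Q = {q. prime q \<and> q \<le> l \<and> \<not> q dvd n \<and> B < q}"
  have cQ: "real (card Q) \<ge> a0 * x / ln x - B - ln n / ln B"
    unfolding Q_def a0_def x_def using count_primes_avoid[OF n0 B2 l2] by simp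
  have "ln n / ln B \<le> (a0 / 16 * x) / (ln x / 4)"
    using lnn lnB lnBpos E8 a0pos xpos n x9 by (intro frac_le) (auto simp: a0_def)
  also have "\<dots> = a0 * x / (4 * ln x)" using E8 by (simp add: field_simps)
  finally have t1: "ln n / ln B \<le> a0 * x / (4 * ln x)" .
  have t2: "real B \<le> a0 * x / (4 * ln x)" using uB E7 by (simp add: a0_def)
  have "a0 * x / ln x - a0 * x / (4 * ln x) - a0 * x / (4 * ln x) = a0 / 2 * (x / ln x)"
    using E8 by (simp add: field_simps)
  hence cQ2: "real (card Q) \<ge> a0 / 2 * (x / ln x)" using cQ t1 t2 by linarith
  have sub: "Q \<subseteq> {y \<in> {0..<n}. coprime y n \<and> y \<le> l}"
  proof
    fix q assume q: "q \<in> Q"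
    hence q1: "prime q" "q \<le> l" "\<not> q dvd n" by (auto simp: Q_def)
    have "coprime q n" using q1 by (simp add: prime_imp_coprime)
    moreover have "q \<noteq> n" using q1 by auto
    ultimately show "q \<in> {y \<in> {0..<n}. coprime y n \<and> y \<le> l}" using q1 ln_le by auto
  qed
  have "card Q \<le> rel_totient n l" unfolding rel_totient_def by (intro card_mono sub) auto
  hence "real (card Q) \<le> real (rel_totient n l)" by simp
  thus ?thesis using cQ2 by (simp add: a0_def)
qed

theorem mainTheorem3:
  shows "\<exists>c::real. \<exists>\<kappa>::real. c > 0 \<and> \<kappa> > 0 \<and>
    (\<forall>n l :: nat. 2 \<le> n \<longrightarrow> 1 \<le> l \<longrightarrow> l \<le> n \<longrightarrow>
      (real l > c * mlog (real n) ^ 5 \<longrightarrow>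
         real (rel_totient n l) \<ge> \<kappa> * (real l / real n) * real (totient n)) \<and>
      (real l > c * mlog (real n) \<longrightarrow>
         real (rel_totient n l) \<ge> \<kappa> * (real l / mlog (real l))))"
proof -
  define a0 :: real where "a0 = ln 2 / 4"
  have a0pos: "a0 > 0" by (simp add: a0_def)
  define P where "P = (\<lambda>x::real. x powr (1/3) \<ge> 3 \<and> x powr (2/3) \<ge> 32 \<and>
     x powr (1/3) + x powr (1/5) / ln (x powr (1/3) - 1) \<le> (ln 2/4) * x powr (2/3) / (4 * ln x) \<and>
     ln (x powr (1/3) - 1) \<ge> ln x / 6 \<and> sqrt x \<ge> 3 \<and> ln (sqrt x - 1) \<ge> ln x / 4 \<and>
     sqrt x \<le> (ln 2/4) * x / (4 * ln x) \<and> ln x \<ge> 1)"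
  have ev: "eventually P at_top"
    unfolding P_def by (intro eventually_conj; real_asymp)
  then obtain N0 where N0': "\<forall>x\<ge>N0. P x"
    unfolding eventually_at_top_linorder by blast
  have N0: "x powr (1/3) \<ge> 3 \<and> x powr (2/3) \<ge> 32 \<and>
     x powr (1/3) + x powr (1/5) / ln (x powr (1/3) - 1) \<le> (ln 2/4) * x powr (2/3) / (4 * ln x) \<and>
     ln (x powr (1/3) - 1) \<ge> ln x / 6 \<and> sqrt x \<ge> 3 \<and> ln (sqrt x - 1) \<ge> ln x / 4 \<and>
     sqrt x \<le> (ln 2/4) * x / (4 * ln x) \<and> ln x \<ge> 1" if "x \<ge> N0" for x
    using N0' that unfolding P_def by blast
  define c where "c = max 1 (max N0 (16 / a0))"
  have c1: "c \<ge> 1" "c \<ge> N0" "c \<ge> 16 / a0" by (auto simp: c_def)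
  define \<kappa> where "\<kappa> = a0 / 24"
  have mlog1: "mlog t \<ge> 1" "ln t \<le> mlog t" for t by (auto simp: mlog_def)
  show ?thesis
  proof (intro exI conjI allI impI)
    show "c > 0" using c1 by simp
    show "\<kappa> > 0" using a0pos by (simp add: \<kappa>_def)
  next
    fix n l :: nat
    assume n: "2 \<le> n" and l1: "1 \<le> l" and ln: "l \<le> n"
    have lnpos: "ln (real n) > 0" using n by simp
    {
      assume big: "real l > c * mlog (real n) ^ 5"
      have "mlog (real n) ^ 5 \<ge> 1" using mlog1 by simp
      hence "c * 1 \<le> c * mlog (real n) ^ 5" using c1 by (intro mult_left_mono) auto
      hence "c * mlog (real n) ^ 5 \<ge> c" by simp
      hence xN: "real l \<ge> N0" using big c1 by linarith
      have "ln (real n) ^ 5 \<le> mlog (real n) ^ 5" using mlog1 lnpos by (intro power_mono) auto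
      also have "\<dots> = 1 * mlog (real n) ^ 5" by simp
      also have "\<dots> \<le> c * mlog (real n) ^ 5"
      proof (intro mult_right_mono)
        have "1 \<le> mlog (real n)" by (rule mlog1)
        thus "0 \<le> mlog (real n) ^ 5" by simp
      qed (use c1 in auto)
      finally have "ln (real n) ^ 5 \<le> real l" using big by linarith
      hence "(ln (real n) ^ 5) powr (1/5) \<le> real l powr (1/5)" using lnpos by (intro powr_mono2) auto
      moreover have "(ln (real n) ^ 5) powr (1/5) = ln (real n)"
      proof -
        have "ln (real n) ^ 5 = ln (real n) powr 5" using lnpos by simp
        hence "(ln (real n) ^ 5) powr (1/5) = ln (real n) powr (5 * (1/5))" by (simp only: powr_powr)
        also have "\<dots> = ln (real n)" using lnpos by simp
        finally show ?thesis .
      qed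
      ultimately have lnn: "ln (real n) \<le> real l powr (1/5)" by simp
      show "real (rel_totient n l) \<ge> \<kappa> * (real l / real n) * real (totient n)"
      proof -
        have NN: "real l powr (1/3) \<ge> 3 \<and> real l powr (2/3) \<ge> 32 \<and>
          real l powr (1/3) + real l powr (1/5) / ln (real l powr (1/3) - 1) \<le> (ln 2/4) * real l powr (2/3) / (4 * ln (real l)) \<and>
          ln (real l powr (1/3) - 1) \<ge> ln (real l) / 6 \<and> ln (real l) \<ge> 1" using N0[OF xN] by blast
        have "real (rel_totient n l) \<ge> (ln 2 / 4) / 24 * (real l / real n) * real (totient n)"
          using NN by (intro part_i[OF n ln _ _ _ _ _ lnn]) blast+
        thus ?thesis by (simp add: \<kappa>_def a0_def)
      qed
    }
    {
      assume big: "real l > c * mlog (real n)"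
      have "c * 1 \<le> c * mlog (real n)" using c1 mlog1 by (intro mult_left_mono) auto
      hence "c * mlog (real n) \<ge> c" by simp
      hence xN: "real l \<ge> N0" using big c1 by linarith
      have "ln (real n) \<le> mlog (real n)" by (rule mlog1)
      also have "\<dots> < real l / c" using big c1 by (simp add: field_simps)
      also have "\<dots> \<le> a0 / 16 * real l"
      proof -
        have "1 / c \<le> a0 / 16" using c1 a0pos by (simp add: field_simps)
        hence "real l * (1/c) \<le> real l * (a0/16)" by (intro mult_left_mono) auto
        thus ?thesis by (simp add: field_simps)
      qed
      finally have lnn: "ln (real n) \<le> (ln 2 / 4) / 16 * real l" by (simp add: a0_def)
      have E: "ln (real l) \<ge> 1" using N0[OF xN] by blast
      have "real (rel_totient n l) \<ge> a0 / 2 * (real l / ln (real l))"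
      proof -
        have NN: "sqrt (real l) \<ge> 3 \<and> ln (sqrt (real l) - 1) \<ge> ln (real l) / 4 \<and>
          sqrt (real l) \<le> (ln 2/4) * real l / (4 * ln (real l)) \<and> ln (real l) \<ge> 1" using N0[OF xN] by blast
        have "real (rel_totient n l) \<ge> (ln 2 / 4) / 2 * (real l / ln (real l))"
          using NN by (intro part_ii[OF n ln _ _ _ _ lnn]) blast+
        thus ?thesis by (simp add: a0_def)
      qed
      moreover have "mlog (real l) = ln (real l)" using E by (simp add: mlog_def)
      moreover have "\<kappa> * (real l / ln (real l)) \<le> a0 / 2 * (real l / ln (real l))"
        using a0pos E by (intro mult_right_mono) (auto simp: \<kappa>_def)
      ultimately show "real (rel_totient n l) \<ge> \<kappa> * (real l / mlog (real l))" by simp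
    }
  qed
qed
end
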